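(* For every constant $c>0$ there is a constant $K$, depending only on $c$, such that the following holds. Let $G$ be a finite, undirected, connected, unweighted, loop-free graph without multi-edges, let $r\in V(G)$, and let $C_1,\dots,C_l$ be the connected components of the graph obtained from $G$ by deleting $r$. For $i\in\{1,\dots,l\}$ let $V_i=\sum_{j\in\{1,\dots,l\}\setminus\{i\}}|V(C_j)|$. If $V_i\ge c\,|V(G)|$ for all $i\in\{1,\dots,l\}$ (i.e., $V_i=\Theta(|V(G)|)$ for all $i$), then for every $v\in V(G)$, $$\delta_{v\bullet}(r)\le K\cdot\overline{\delta(r)},\qquad\text{where }\ \overline{\delta(r)}=\frac{1}{|V(G)|}\sum_{u\in V(G)}\delta_{u\bullet}(r);$$ that is, the quantity $\mu(r)$ (a value with $\delta_{v\bullet}(r)\le\mu(r)\,\overline{\delta(r)}$ for all $v$) can be taken to be a constant.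
   Context: For $s,t\in V(G)$, $\sigma_{st}$ is the number of shortest paths between $s$ and $t$, and $\sigma_{st}(v)$ is the number of those that pass through $v$ as an internal vertex. The dependency score of $s$ on $v$ is $\delta_{s\bullet}(v)=\sum_{t\in V(G)\setminus\{v,s\}}\frac{\sigma_{st}(v)}{\sigma_{st}}$ for $s\neq v$, and $\delta_{v\bullet}(v)=0$. The paper's statement says "if for all $i$, $V_i=\Theta(|V(G)|)$, then $\mu(r)$ is a constant"; the claim is the uniform (constant-bounded) reading of this asymptotic statement. *)

theory Defs
  imports Complex_Main
begin

definition simple_graph :: "'a set \<Rightarrow> ('a \<Rightarrow> 'a \<Rightarrow> bool) \<Rightarrow> bool" where
  "simple_graph V E \<longleftrightarrow> finite V \<and> (\<forall>x y. E x y \<longrightarrow> x \<in> V \<and> y \<in> V)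
     \<and> (\<forall>x y. E x y \<longrightarrow> E y x) \<and> (\<forall>x. \<not> E x x)"

definition walk_in :: "'a set \<Rightarrow> ('a \<Rightarrow> 'a \<Rightarrow> bool) \<Rightarrow> 'a list \<Rightarrow> 'a \<Rightarrow> 'a \<Rightarrow> bool" where
  "walk_in W E xs s t \<longleftrightarrow> xs \<noteq> [] \<and> hd xs = s \<and> last xs = t \<and> successively E xs \<and> set xs \<subseteq> W"

definition reach :: "'a set \<Rightarrow> ('a \<Rightarrow> 'a \<Rightarrow> bool) \<Rightarrow> 'a \<Rightarrow> 'a \<Rightarrow> bool" where
  "reach W E s t \<longleftrightarrow> (\<exists>xs. walk_in W E xs s t)"

definition graph_connected :: "'a set \<Rightarrow> ('a \<Rightarrow> 'a \<Rightarrow> bool) \<Rightarrow> bool" where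
  "graph_connected V E \<longleftrightarrow> (\<forall>s\<in>V. \<forall>t\<in>V. reach V E s t)"

definition comps_minus :: "'a set \<Rightarrow> ('a \<Rightarrow> 'a \<Rightarrow> bool) \<Rightarrow> 'a \<Rightarrow> 'a set set" where
  "comps_minus V E r = (\<lambda>s. {t \<in> V - {r}. reach (V - {r}) E s t}) ` (V - {r})"

definition shortest_paths :: "'a set \<Rightarrow> ('a \<Rightarrow> 'a \<Rightarrow> bool) \<Rightarrow> 'a \<Rightarrow> 'a \<Rightarrow> 'a list set" where
  "shortest_paths V E s t = {xs. walk_in V E xs s t \<and>
      (\<forall>ys. walk_in V E ys s t \<longrightarrow> length xs \<le> length ys)}"

definition sigma :: "'a set \<Rightarrow> ('a \<Rightarrow> 'a \<Rightarrow> bool) \<Rightarrow> 'a \<Rightarrow> 'a \<Rightarrow> nat" where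
  "sigma V E s t = card (shortest_paths V E s t)"

definition sigma_via :: "'a set \<Rightarrow> ('a \<Rightarrow> 'a \<Rightarrow> bool) \<Rightarrow> 'a \<Rightarrow> 'a \<Rightarrow> 'a \<Rightarrow> nat" where
  "sigma_via V E s t v = card {xs \<in> shortest_paths V E s t. v \<in> set (tl (butlast xs))}"

definition dependency :: "'a set \<Rightarrow> ('a \<Rightarrow> 'a \<Rightarrow> bool) \<Rightarrow> 'a \<Rightarrow> 'a \<Rightarrow> real" where
  "dependency V E s v = (if s = v then 0 else
      (\<Sum>t\<in>V - {v, s}. real (sigma_via V E s t v) / real (sigma V E s t)))"

definition avg_dependency :: "'a set \<Rightarrow> ('a \<Rightarrow> 'a \<Rightarrow> bool) \<Rightarrow> 'a \<Rightarrow> real" where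
  "avg_dependency V E r = (\<Sum>u\<in>V. dependency V E u r) / real (card V)"

end

theory Submission
  imports Defs
begin

lemma reach_refl: "s \<in> W \<Longrightarrow> reach W E s s"
  unfolding reach_def walk_in_def by (rule exI[of _ "[s]"]) auto

lemma reach_sym:
  assumes sym: "\<forall>x y. E x y \<longrightarrow> E y x" and "reach W E s t"
  shows "reach W E t s"
proof -
  from assms(2) obtain xs where "walk_in W E xs s t" unfolding reach_def by blast
  hence "walk_in W E (rev xs) t s" unfolding walk_in_def
    by (auto simp: hd_rev last_rev intro: successively_mono[where P=E] dest: sym[rule_format])
  thus ?thesis unfolding reach_def by blast
qed

lemma reach_trans:
  assumes "reach W E s t" "reach W E t u"
  shows "reach W E s u"
proof -
  from assms obtain xs ys where xs: "walk_in W E xs s t" and ys: "walk_in W E ys t u"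
    unfolding reach_def by blast
  from ys obtain ys' where ys': "ys = t # ys'" unfolding walk_in_def by (cases ys) auto
  have "walk_in W E (xs @ ys') s u"
    using xs ys ys' unfolding walk_in_def
    by (auto simp: successively_append_iff successively_Cons)
  thus ?thesis unfolding reach_def by blast
qed

lemma mem_inner:
  assumes "x \<in> set xs" "x \<noteq> hd xs" "x \<noteq> last xs"
  shows "x \<in> set (tl (butlast xs))"
proof (cases xs)
  case Nil then show ?thesis using assms by simp
next
  case (Cons a ys)
  hence y1: "x \<in> set ys" using assms by auto
  hence y2: "ys \<noteq> []" by auto
  have "x \<noteq> last ys" using assms Cons y2 by auto
  note y1 y2 this
  hence "x \<in> set (butlast ys)"
    by (induct ys) auto
  thus ?thesis using Cons \<open>ys \<noteq> []\<close> by simp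
qed

lemma sp_finite:
  assumes "finite V"
  shows "finite (shortest_paths V E s t)"
proof (cases "shortest_paths V E s t = {}")
  case True then show ?thesis by simp
next
  case False
  then obtain xs where xs: "xs \<in> shortest_paths V E s t" by blast
  have "shortest_paths V E s t \<subseteq> {ys. set ys \<subseteq> V \<and> length ys \<le> length xs}"
    using xs unfolding shortest_paths_def walk_in_def by auto
  thus ?thesis using finite_lists_length_le[OF assms] finite_subset by blast
qed

lemma sp_nonempty:
  assumes "reach V E s t"
  shows "shortest_paths V E s t \<noteq> {}"
proof -
  let ?P = "\<lambda>n. \<exists>xs. walk_in V E xs s t \<and> length xs = n"
  have ex: "\<exists>n. ?P n" using assms unfolding reach_def by blast
  define n where "n = (LEAST n. ?P n)"
  have "?P n" unfolding n_def using LeastI_ex[OF ex] .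
  then obtain xs where xs: "walk_in V E xs s t" "length xs = n" by blast
  have "\<forall>ys. walk_in V E ys s t \<longrightarrow> length xs \<le> length ys"
    using xs unfolding n_def by (auto intro: Least_le)
  thus ?thesis using xs unfolding shortest_paths_def by blast
qed

lemma ratio_le1:
  assumes "finite V"
  shows "real (sigma_via V E s t v) / real (sigma V E s t) \<le> 1"
proof -
  have "sigma_via V E s t v \<le> sigma V E s t"
    unfolding sigma_via_def sigma_def by (rule card_mono[OF sp_finite[OF assms]]) auto
  thus ?thesis by (cases "sigma V E s t = 0") auto
qed

lemma ratio_nonneg: "0 \<le> real (sigma_via V E s t v) / real (sigma V E s t)"
  by simp

lemma dep_nonneg: "0 \<le> dependency V E s v"
  unfolding dependency_def by (auto intro: sum_nonneg)

lemma dep_upper: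
  assumes "finite V" "r \<in> V"
  shows "dependency V E v r \<le> real (card V) - 1"
proof (cases "v = r")
  case True
  have "card V \<ge> 1" using assms by (simp add: Suc_le_eq card_gt_0_iff) blast
  then show ?thesis using True by (simp add: dependency_def)
next
  case False
  have "dependency V E v r \<le> (\<Sum>t\<in>V - {r, v}. 1)"
    unfolding dependency_def using False by (simp del: sum_constant) (rule sum_mono, rule ratio_le1[OF assms(1)])
  also have "\<dots> = real (card (V - {r, v}))" by simp
  also have "\<dots> \<le> real (card (V - {r}))"
    using assms by (simp only: of_nat_le_iff) (rule card_mono, auto)
  also have "\<dots> = real (card V) - 1"
  proof -
    have "card V \<ge> 1" using assms by (simp add: Suc_le_eq card_gt_0_iff) blast
    moreover have "card (V - {r}) = card V - 1" by (rule card_Diff_singleton[OF assms(2)])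
    ultimately show ?thesis by (simp add: of_nat_diff)
  qed
  finally show ?thesis .
qed


lemma comp_eq:
  assumes sym: "\<forall>x y. E x y \<longrightarrow> E y x"
    and "reach W E s t" "reach W E u t"
  shows "{x\<in>W. reach W E s x} = {x\<in>W. reach W E u x}"
proof -
  have ts: "reach W E t u" by (rule reach_sym[OF sym assms(3)])
  have su: "reach W E s u" by (rule reach_trans[OF assms(2) ts])
  have us: "reach W E u s" using reach_sym[OF sym su] .
  show ?thesis using reach_trans[OF su] reach_trans[OF us] by blast
qed

lemma ratio_one:
  assumes sg: "simple_graph V E" and conn: "graph_connected V E"
    and u: "u \<in> V - {r}" and t: "t \<in> V - {r}" and nr: "\<not> reach (V - {r}) E u t"
  shows "real (sigma_via V E u t r) / real (sigma V E u t) = 1"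
proof -
  have fin: "finite V" using sg unfolding simple_graph_def by blast
  have sub: "shortest_paths V E u t \<subseteq> {xs \<in> shortest_paths V E u t. r \<in> set (tl (butlast xs))}"
  proof
    fix xs assume xs: "xs \<in> shortest_paths V E u t"
    hence w: "walk_in V E xs u t" unfolding shortest_paths_def by blast
    have "r \<in> set xs"
    proof (rule ccontr)
      assume nrx: "r \<notin> set xs"
      have "set xs \<subseteq> V" using w unfolding walk_in_def by blast
      hence "set xs \<subseteq> V - {r}" using nrx by blast
      hence "walk_in (V - {r}) E xs u t" using w unfolding walk_in_def by blast
      thus False using nr unfolding reach_def by blast
    qed
    moreover have "hd xs = u" "last xs = t" using w unfolding walk_in_def by blast+
    moreover have "r \<noteq> u" "r \<noteq> t" using u t by blast+
    ultimately have "r \<in> set (tl (butlast xs))" by (intro mem_inner) simp_all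
    thus "xs \<in> {xs \<in> shortest_paths V E u t. r \<in> set (tl (butlast xs))}"
      using xs by blast
  qed
  have eq: "{xs \<in> shortest_paths V E u t. r \<in> set (tl (butlast xs))} = shortest_paths V E u t"
    using sub by blast
  have "reach V E u t" using conn u t unfolding graph_connected_def by blast
  hence ne: "shortest_paths V E u t \<noteq> {}" by (rule sp_nonempty)
  have "sigma V E u t \<noteq> 0" unfolding sigma_def
    using ne sp_finite[OF fin] by simp
  thus ?thesis unfolding sigma_via_def eq sigma_def[symmetric] by simp
qed

lemma dep_lower:
  assumes sg: "simple_graph V E" and conn: "graph_connected V E" and rV: "r \<in> V"
    and hyp: "\<forall>C\<in>comps_minus V E r.
        (\<Sum>C'\<in>comps_minus V E r - {C}. real (card C')) \<ge> c * real (card V)"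
    and u: "u \<in> V - {r}"
  shows "dependency V E u r \<ge> c * real (card V)"
proof -
  define W where "W = V - {r}"
  define comp where "comp = (\<lambda>s. {t \<in> W. reach W E s t})"
  have fin: "finite V" using sg unfolding simple_graph_def by blast
  have sym: "\<forall>x y. E x y \<longrightarrow> E y x" using sg unfolding simple_graph_def by blast
  have comps: "comps_minus V E r = comp ` W" unfolding comps_minus_def comp_def W_def by simp
  define C where "C = comp u"
  have C: "C \<in> comps_minus V E r" using comps u unfolding C_def W_def by blast
  define U where "U = \<Union>(comps_minus V E r - {C})"
  have finW: "finite W" using fin unfolding W_def by simp
  have fincomps: "finite (comps_minus V E r)" using comps finW by simp
  have disj: "pairwise disjnt (comps_minus V E r - {C})"
  proof (rule pairwiseI)
    fix A B assume A: "A \<in> comps_minus V E r - {C}" and B: "B \<in> comps_minus V E r - {C}"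
      and ne: "A \<noteq> B"
    from A obtain a where a: "A = comp a" using comps by auto
    from B obtain b where b: "B = comp b" using comps by auto
    show "disjnt A B"
    proof (rule ccontr)
      assume "\<not> disjnt A B"
      then obtain t where "t \<in> A" "t \<in> B" unfolding disjnt_def by blast
      hence "reach W E a t" "reach W E b t" using a b unfolding comp_def by auto
      hence "A = B" using comp_eq[OF sym] a b unfolding comp_def by blast
      thus False using ne by blast
    qed
  qed
  have cardU: "card U = (\<Sum>C'\<in>comps_minus V E r - {C}. card C')"
    unfolding U_def
    by (rule card_Union_disjoint[OF disj]) (use comps finW in \<open>auto simp: comp_def\<close>)
  have Uprop: "t \<in> W \<and> \<not> reach W E u t" if tU: "t \<in> U" for t
  proof -
    from tU obtain A where A: "A \<in> comps_minus V E r - {C}" "t \<in> A" unfolding U_def by blast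
    from A obtain a where a: "A = comp a" using comps by auto
    have tW: "t \<in> W" "reach W E a t" using A a unfolding comp_def by auto
    have "\<not> reach W E u t"
    proof
      assume "reach W E u t"
      hence "comp a = comp u" using comp_eq[OF sym] tW unfolding comp_def by blast
      thus False using A a unfolding C_def by blast
    qed
    thus ?thesis using tW by blast
  qed
  have uW: "u \<in> W" using u unfolding W_def .
  have Usub: "U \<subseteq> V - {r, u}"
  proof
    fix t assume "t \<in> U"
    with Uprop have "t \<in> W" "\<not> reach W E u t" by auto
    moreover have "reach W E u u" using reach_refl[OF uW] .
    ultimately show "t \<in> V - {r, u}" unfolding W_def by auto
  qed
  have "c * real (card V) \<le> (\<Sum>C'\<in>comps_minus V E r - {C}. real (card C'))"
    using hyp C by blast
  also have "\<dots> = real (card U)" using cardU by simp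
  also have "\<dots> = (\<Sum>t\<in>U. real (sigma_via V E u t r) / real (sigma V E u t))"
  proof -
    have "(\<Sum>t\<in>U. real (sigma_via V E u t r) / real (sigma V E u t)) = (\<Sum>t\<in>U. 1)"
    proof (rule sum.cong[OF refl])
      fix t assume "t \<in> U"
      hence "t \<in> W" "\<not> reach W E u t" using Uprop by auto
      thus "real (sigma_via V E u t r) / real (sigma V E u t) = 1"
        using ratio_one[OF sg conn u] unfolding W_def by blast
    qed
    thus ?thesis by simp
  qed
  also have "\<dots> \<le> (\<Sum>t\<in>V - {r, u}. real (sigma_via V E u t r) / real (sigma V E u t))"
    by (rule sum_mono2) (use fin Usub in auto)
  also have "\<dots> = dependency V E u r" using u unfolding dependency_def by auto
  finally show ?thesis .
qed

theorem theorem2: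
  fixes c :: real
  assumes "c > 0"
  shows "\<exists>K::real. \<forall>(V::'a set) E r.
     simple_graph V E \<longrightarrow> graph_connected V E \<longrightarrow> r \<in> V \<longrightarrow>
     (\<forall>C\<in>comps_minus V E r.
        (\<Sum>C'\<in>comps_minus V E r - {C}. real (card C')) \<ge> c * real (card V)) \<longrightarrow>
     (\<forall>v\<in>V. dependency V E v r \<le> K * avg_dependency V E r)"
proof (intro exI[of _ "1 / c"] allI impI ballI)
  fix V :: "'a set" and E r v
  assume sg: "simple_graph V E" and conn: "graph_connected V E" and rV: "r \<in> V"
    and hyp: "\<forall>C\<in>comps_minus V E r.
        (\<Sum>C'\<in>comps_minus V E r - {C}. real (card C')) \<ge> c * real (card V)"
    and v: "v \<in> V"
  have fin: "finite V" using sg unfolding simple_graph_def by blast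
  have ne: "V \<noteq> {}" using rV by blast
  have cg: "card V > 0" using fin ne by (simp add: card_gt_0_iff)
  hence cpos: "real (card V) > 0" by simp
  have s1: "(\<Sum>u\<in>V - {r}. c * real (card V)) \<le> (\<Sum>u\<in>V - {r}. dependency V E u r)"
    by (rule sum_mono) (rule dep_lower[OF sg conn rV hyp])
  have s2: "(\<Sum>u\<in>V - {r}. dependency V E u r) \<le> (\<Sum>u\<in>V. dependency V E u r)"
    by (rule sum_mono2[OF fin]) (blast, rule dep_nonneg)
  have cd: "real (card (V - {r})) = real (card V) - 1"
  proof -
    have "card V \<ge> 1" using cg by linarith
    moreover have "card (V - {r}) = card V - 1" by (rule card_Diff_singleton[OF rV])
    ultimately show ?thesis by (simp add: of_nat_diff)
  qed
  have s0: "(\<Sum>u\<in>V - {r}. c * real (card V)) = (real (card V) - 1) * c * real (card V)"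
    by (simp only: sum_constant cd)
  have tot: "(real (card V) - 1) * c * real (card V) \<le> (\<Sum>u\<in>V. dependency V E u r)"
    using s0 s1 s2 by linarith
  have avg: "(real (card V) - 1) * c \<le> avg_dependency V E r"
    unfolding avg_dependency_def using cpos tot by (simp add: pos_le_divide_eq)
  have d: "dependency V E v r \<le> real (card V) - 1" using dep_upper[OF fin rV] .
  have e: "real (card V) - 1 = (1 / c) * ((real (card V) - 1) * c)" using assms by simp
  have f: "(1 / c) * ((real (card V) - 1) * c) \<le> (1 / c) * avg_dependency V E r"
    using avg assms by (intro mult_left_mono) auto
  show "dependency V E v r \<le> 1 / c * avg_dependency V E r" using d e f by linarith
qed

end
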